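(* Let $\kappa$ be a regular uncountable cardinal and let $\mu,\lambda,\chi,\theta\le\kappa$ be cardinals with $\lambda^{<\chi}<\kappa\le2^\lambda$ and $\lambda^{<\chi}\le\theta^{<\chi}=\theta$. For every coloring $c_1:[\kappa]^2\to\theta$ there exists a coloring $c_0:[\kappa]^2\to\theta$ such that for every partition $p:[\kappa]^2\to\mu$: (1) if $c_1$ witnesses $\mathrm{pr}_1(\kappa,\kappa,\theta,\chi)_p$ then $c_0$ witnesses $\mathrm{pr}_0(\kappa,\kappa,\theta,\chi)_p$; (2) for every cardinal $\nu$, if $c_1$ witnesses $\mathrm{pr}_1(\kappa,\nu\circledast\kappa/1\circledast\kappa,\theta,\chi)_p$ then $c_0$ witnesses $\mathrm{pr}_0(\kappa,\nu\circledast\kappa/1\circledast\kappa,\theta,\chi)_p$.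
   Context: $[\kappa]^2$ denotes the set of pairs $(\alpha,\beta)$ with $\alpha<\beta<\kappa$; a partition is any function $p:[\kappa]^2\to\mu$. For an ordinal $\sigma$, $[\kappa]^\sigma$ is the set of subsets of $\kappa$ of order type $\sigma$; for $a\in[\kappa]^\sigma$ and $i<\sigma$, $a(i)$ is the $i$-th element of $a$; $a<b$ means every element of $a$ is below every element of $b$. Given $p:[\kappa]^2\to\mu$, a coloring $c:[\kappa]^2\to\theta$ witnesses: - $\mathrm{pr}_1(\kappa,\kappa,\theta,\chi)_p$ iff for every ordinal $\sigma<\chi$, every pairwise disjoint $\mathcal A\subseteq[\kappa]^\sigma$ of size $\kappa$ and every $\tau:\mu\to\theta$ there are $a,b\in\mathcal A$, $a<b$, with $c(\alpha,\beta)=\tau(p(\alpha,\beta))$ for all $\alpha\in a,\beta\in b$; - $\mathrm{pr}_0(\kappa,\kappa,\theta,\chi)_p$ iff for every ordinal $\sigma<\chi$, every pairwise disjoint $\mathcal A\subseteq[\kappa]^\sigma$ of size $\kappa$ and every matrix $(\tau_{i,j})_{i,j<\sigma}$ of functions $\mu\to\theta$ there are $a,b\in\mathcal A$, $a<b$, with $c(a(i),b(j))=\tau_{i,j}(p(a(i),b(j)))$ for all $i,j<\sigma$; - $\mathrm{pr}_1(\kappa,\nu\circledast\kappa/1\circledast\kappa,\theta,\chi)_p$ iff for every ordinal $\sigma<\chi$ and every two families $\mathcal A,\mathcal B\subseteq[\kappa]^\sigma$, each pairwise disjoint, with $|\mathcal A|=\nu$, $|\mathcal B|=\kappa$, there is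 $a\in\mathcal A$ such that for every $\tau:\mu\to\theta$ there is $b\in\mathcal B$ with $a<b$ and $c(\alpha,\beta)=\tau(p(\alpha,\beta))$ for all $\alpha\in a,\beta\in b$; - $\mathrm{pr}_0(\kappa,\nu\circledast\kappa/1\circledast\kappa,\theta,\chi)_p$ iff for every ordinal $\sigma<\chi$ and every two families $\mathcal A,\mathcal B\subseteq[\kappa]^\sigma$, each pairwise disjoint, with $|\mathcal A|=\nu$, $|\mathcal B|=\kappa$, there is $a\in\mathcal A$ such that for every matrix $(\tau_{i,j})_{i,j<\sigma}$ of functions $\mu\to\theta$ there is $b\in\mathcal B$ with $a<b$ and $c(a(i),b(j))=\tau_{i,j}(p(a(i),b(j)))$ for all $i,j<\sigma$. *)

theory Defs
  imports Main
begin

unbundle cardinal_syntax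

text \<open>
  The regular uncountable cardinal kappa is a cardinal order
  (initial ordinal) r on the carrier Field r; its elements are the ordinals
  below kappa.  A cardinal is represented by a set of that cardinality
  (theta by a colour set T, mu by a partition-colour set M, lambda by L,
  chi by X, nu by N).  Ordinals sigma below chi are well-orders sigma with
  sigma <o (card_of (X)).
\<close>

definition olt :: "'a rel \<Rightarrow> 'a \<Rightarrow> 'a \<Rightarrow> bool" where
  "olt r \<alpha> \<beta> \<longleftrightarrow> (\<alpha>, \<beta>) \<in> r \<and> \<alpha> \<noteq> \<beta>"

definition set_lt :: "'a rel \<Rightarrow> 'a set \<Rightarrow> 'a set \<Rightarrow> bool" where
  "set_lt r a b \<longleftrightarrow> (\<forall>\<alpha>\<in>a. \<forall>\<beta>\<in>b. olt r \<alpha> \<beta>)"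

text \<open>a(i): the i-th element of a (a of order type sigma), via the unique
  isomorphism from sigma onto the restriction of r to a\<close>
definition nth_elem :: "'a rel \<Rightarrow> 'b rel \<Rightarrow> 'a set \<Rightarrow> 'b \<Rightarrow> 'a" where
  "nth_elem r \<sigma> a i = (SOME f. iso \<sigma> (Restr r a) f) i"

definition disj_fam :: "'a rel \<Rightarrow> 'b rel \<Rightarrow> 'a set set \<Rightarrow> bool" where
  "disj_fam r \<sigma> \<A> \<longleftrightarrow>
     (\<forall>a\<in>\<A>. a \<subseteq> Field r \<and> Restr r a =o \<sigma>) \<and> pairwise disjnt \<A>"

text \<open>C has cardinality base^{<chi} = sup { |base|^nu : nu < chi cardinal },
  where chi = (card_of (X))\<close>
definition cexp_less_is :: "'l set \<Rightarrow> 'x set \<Rightarrow> 'd set \<Rightarrow> bool" where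
  "cexp_less_is L X C \<longleftrightarrow>
     (\<forall>S::'x set. (card_of (S)) <o (card_of (X)) \<longrightarrow> (card_of (Func S L)) <=o (card_of (C))) \<and>
     (\<forall>D::'d set. (\<forall>S::'x set. (card_of (S)) <o (card_of (X)) \<longrightarrow> (card_of (Func S L)) <=o (card_of (D))) \<longrightarrow> (card_of (C)) <=o (card_of (D)))"

definition coloring_into :: "'a rel \<Rightarrow> ('a \<Rightarrow> 'a \<Rightarrow> 't) \<Rightarrow> 't set \<Rightarrow> bool" where
  "coloring_into r c T \<longleftrightarrow> (\<forall>\<alpha> \<beta>. olt r \<alpha> \<beta> \<longrightarrow> c \<alpha> \<beta> \<in> T)"

definition pr1 :: "'a rel \<Rightarrow> 't set \<Rightarrow> 'x set \<Rightarrow> 'm set \<Rightarrow> ('a \<Rightarrow> 'a \<Rightarrow> 'm)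
                    \<Rightarrow> ('a \<Rightarrow> 'a \<Rightarrow> 't) \<Rightarrow> bool" where
  "pr1 r T X M p c \<longleftrightarrow>
     (\<forall>\<sigma>::'a rel. Well_order \<sigma> \<and> \<sigma> <o (card_of (X)) \<longrightarrow>
       (\<forall>\<A>. disj_fam r \<sigma> \<A> \<and> (card_of (\<A>)) =o r \<longrightarrow>
         (\<forall>\<tau>::'m \<Rightarrow> 't. (\<forall>x\<in>M. \<tau> x \<in> T) \<longrightarrow>
           (\<exists>a\<in>\<A>. \<exists>b\<in>\<A>. set_lt r a b \<and>
              (\<forall>\<alpha>\<in>a. \<forall>\<beta>\<in>b. c \<alpha> \<beta> = \<tau> (p \<alpha> \<beta>))))))"

definition pr0 :: "'a rel \<Rightarrow> 't set \<Rightarrow> 'x set \<Rightarrow> 'm set \<Rightarrow> ('a \<Rightarrow> 'a \<Rightarrow> 'm)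
                    \<Rightarrow> ('a \<Rightarrow> 'a \<Rightarrow> 't) \<Rightarrow> bool" where
  "pr0 r T X M p c \<longleftrightarrow>
     (\<forall>\<sigma>::'a rel. Well_order \<sigma> \<and> \<sigma> <o (card_of (X)) \<longrightarrow>
       (\<forall>\<A>. disj_fam r \<sigma> \<A> \<and> (card_of (\<A>)) =o r \<longrightarrow>
         (\<forall>\<tau>::'a \<Rightarrow> 'a \<Rightarrow> 'm \<Rightarrow> 't. (\<forall>i\<in>Field \<sigma>. \<forall>j\<in>Field \<sigma>. \<forall>x\<in>M. \<tau> i j x \<in> T) \<longrightarrow>
           (\<exists>a\<in>\<A>. \<exists>b\<in>\<A>. set_lt r a b \<and>
              (\<forall>i\<in>Field \<sigma>. \<forall>j\<in>Field \<sigma>.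
                 c (nth_elem r \<sigma> a i) (nth_elem r \<sigma> b j)
                   = \<tau> i j (p (nth_elem r \<sigma> a i) (nth_elem r \<sigma> b j)))))))"

definition pr1_nu :: "'a rel \<Rightarrow> 'n set \<Rightarrow> 't set \<Rightarrow> 'x set \<Rightarrow> 'm set \<Rightarrow> ('a \<Rightarrow> 'a \<Rightarrow> 'm)
                    \<Rightarrow> ('a \<Rightarrow> 'a \<Rightarrow> 't) \<Rightarrow> bool" where
  "pr1_nu r N T X M p c \<longleftrightarrow>
     (\<forall>\<sigma>::'a rel. Well_order \<sigma> \<and> \<sigma> <o (card_of (X)) \<longrightarrow>
       (\<forall>\<A> \<B>. disj_fam r \<sigma> \<A> \<and> disj_fam r \<sigma> \<B> \<and> (card_of (\<A>)) =o (card_of (N)) \<and> (card_of (\<B>)) =o r \<longrightarrow>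
         (\<exists>a\<in>\<A>. \<forall>\<tau>::'m \<Rightarrow> 't. (\<forall>x\<in>M. \<tau> x \<in> T) \<longrightarrow>
           (\<exists>b\<in>\<B>. set_lt r a b \<and>
              (\<forall>\<alpha>\<in>a. \<forall>\<beta>\<in>b. c \<alpha> \<beta> = \<tau> (p \<alpha> \<beta>))))))"

definition pr0_nu :: "'a rel \<Rightarrow> 'n set \<Rightarrow> 't set \<Rightarrow> 'x set \<Rightarrow> 'm set \<Rightarrow> ('a \<Rightarrow> 'a \<Rightarrow> 'm)
                    \<Rightarrow> ('a \<Rightarrow> 'a \<Rightarrow> 't) \<Rightarrow> bool" where
  "pr0_nu r N T X M p c \<longleftrightarrow>
     (\<forall>\<sigma>::'a rel. Well_order \<sigma> \<and> \<sigma> <o (card_of (X)) \<longrightarrow>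
       (\<forall>\<A> \<B>. disj_fam r \<sigma> \<A> \<and> disj_fam r \<sigma> \<B> \<and> (card_of (\<A>)) =o (card_of (N)) \<and> (card_of (\<B>)) =o r \<longrightarrow>
         (\<exists>a\<in>\<A>. \<forall>\<tau>::'a \<Rightarrow> 'a \<Rightarrow> 'm \<Rightarrow> 't.
             (\<forall>i\<in>Field \<sigma>. \<forall>j\<in>Field \<sigma>. \<forall>x\<in>M. \<tau> i j x \<in> T) \<longrightarrow>
           (\<exists>b\<in>\<B>. set_lt r a b \<and>
              (\<forall>i\<in>Field \<sigma>. \<forall>j\<in>Field \<sigma>.
                 c (nth_elem r \<sigma> a i) (nth_elem r \<sigma> b j)
                   = \<tau> i j (p (nth_elem r \<sigma> a i) (nth_elem r \<sigma> b j)))))))"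

end

theory Submission
  imports Defs
begin

unbundle cardinal_syntax


lemma Func_mono_card:
  assumes "|A1| \<le>o |B1|" "|A2| \<le>o |B2|" "A2 = {} \<Longrightarrow> B2 = {}"
  shows "|Func A2 A1| \<le>o |Func B2 B1|"
  using cexp_mono'[of "|A1|" "|B1|" "|A2|" "|B2|"] assms by (simp add: cexp_def Field_card_of)

lemma times_le_inf:
  assumes "infinite Z" "|A| \<le>o |Z|" "|B| \<le>o |Z|"
  shows "|A \<times> B| \<le>o |Z|"
  using card_of_Times_ordLeq_infinite_Field[OF _ _ _ card_of_Card_order, of Z A B] assms
  by (simp add: Field_card_of)

lemma Func_finite_card:
  assumes "finite S" "infinite Z"
  shows "|Func S Z| \<le>o |Z|"
  using assms(1)
proof (induction S rule: finite_induct)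
  case empty
  have "Z \<noteq> {}" using assms(2) by auto
  then obtain z where "z \<in> Z" by auto
  have 1: "|Func {} Z| \<le>o |{z}|"
    by (rule card_of_ordLeqI[where f="\<lambda>_. z"]) (auto simp: Func_empty inj_on_def)
  have 2: "|{z}| \<le>o |Z|" using \<open>z \<in> Z\<close> by (intro card_of_mono1) auto
  show ?case using ordLeq_transitive[OF 1 2] .
next
  case (insert x S)
  have 1: "|Func (insert x S) Z| \<le>o |Func S Z \<times> Z|"
  proof (rule card_of_ordLeqI[where f="\<lambda>f. (\<lambda>y. if y \<in> S then f y else undefined, f x)"])
    show "inj_on (\<lambda>f. (\<lambda>y. if y \<in> S then f y else undefined, f x)) (Func (insert x S) Z)"
      unfolding inj_on_def Func_def
      by (auto simp: fun_eq_iff) (metis insert_iff)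
    show "\<And>f. f \<in> Func (insert x S) Z \<Longrightarrow> (\<lambda>y. if y \<in> S then f y else undefined, f x) \<in> Func S Z \<times> Z"
      unfolding Func_def by auto
  qed
  have 2: "|Func S Z \<times> Z| \<le>o |Z|"
    using times_le_inf[OF assms(2) insert.IH ordLeq_refl[OF card_of_Card_order]] .
  show ?case using ordLeq_transitive[OF 1 2] .
qed

lemma singl_less_two:
  assumes "x1 \<in> X" "x2 \<in> X" "x1 \<noteq> x2"
  shows "|{y}| <o |X|"
proof -
  have "\<not> |X| \<le>o |{y}|"
  proof
    assume "|X| \<le>o |{y}|"
    then obtain f where "inj_on f X" "f ` X \<subseteq> {y}" unfolding card_of_ordLeq[symmetric] by blast
    then show False using assms unfolding inj_on_def by (metis image_subset_iff singletonD)
  qed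
  then show ?thesis using not_ordLeq_iff_ordLess[OF card_of_Well_order card_of_Well_order] by blast
qed

lemma fin_less_inf: "finite A \<Longrightarrow> infinite B \<Longrightarrow> |A| <o |B|"
  using finite_ordLess_infinite[OF card_of_Well_order card_of_Well_order, of A B] by (simp add: Field_card_of)

definition small :: "'x set \<Rightarrow> 'b set \<Rightarrow> bool" where
  "small X S \<longleftrightarrow> finite S \<or> |S| <o |X|"

lemma small_times:
  assumes "small X A" "small X B"
  shows "small X (A \<times> B)"
proof (cases "finite A \<and> finite B")
  case True then show ?thesis by (simp add: small_def)
next
  case False
  have Xinf: "infinite X"
  proof
    assume fX: "finite X"
    have "finite A"
    proof (cases "finite A")
      case False
      then have l: "|A| <o |X|" using assms(1) unfolding small_def by simp
      show ?thesis using card_of_ordLeq_finite[OF ordLess_imp_ordLeq[OF l] fX] by simp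
    qed
    moreover have "finite B"
    proof (cases "finite B")
      case False
      then have l: "|B| <o |X|" using assms(2) unfolding small_def by simp
      show ?thesis using card_of_ordLeq_finite[OF ordLess_imp_ordLeq[OF l] fX] by simp
    qed
    ultimately show False using False by simp
  qed
  have lA: "|A| <o |X|"
    using assms(1) fin_less_inf[OF _ Xinf] unfolding small_def by auto
  have lB: "|B| <o |X|"
    using assms(2) fin_less_inf[OF _ Xinf] unfolding small_def by auto
  have "|A| \<le>o |B| \<or> |B| \<le>o |A|"
    using ordLeq_total[OF card_of_Well_order[of A] card_of_Well_order[of B]] by blast
  then show ?thesis
  proof
    assume le: "|A| \<le>o |B|"
    then have "infinite B" using False card_of_ordLeq_infinite[OF le] by auto
    then have "|A \<times> B| \<le>o |B|" using times_le_inf[OF _ le ordLeq_refl[OF card_of_Card_order]] by simp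
    then show ?thesis using ordLeq_ordLess_trans[OF _ lB] unfolding small_def by blast
  next
    assume le: "|B| \<le>o |A|"
    then have "infinite A" using False card_of_ordLeq_infinite[OF le] by auto
    then have "|A \<times> B| \<le>o |A|" using times_le_inf[OF _ ordLeq_refl[OF card_of_Card_order] le] by simp
    then show ?thesis using ordLeq_ordLess_trans[OF _ lA] unfolding small_def by blast
  qed
qed

lemma small_transfer:
  fixes X :: "'x set" and Z :: "'z set" and S' :: "'s set"
  assumes hyp: "\<forall>S::'x set. |S| <o |X| \<longrightarrow> |Func S Z| \<le>o |D|"
    and Zinf: "infinite Z" and ZD: "|Z| \<le>o |D|" and sm: "small X S'"
  shows "|Func S' Z| \<le>o |D|"
proof (cases "|S'| <o |X|")
  case True
  then have "|S'| \<le>o |X|" by (rule ordLess_imp_ordLeq)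
  then obtain f where f: "inj_on f S'" "f ` S' \<subseteq> X"
    unfolding card_of_ordLeq[symmetric] by blast
  have "|f ` S'| <o |X|" using ordLeq_ordLess_trans[OF card_of_image True] .
  then have 1: "|Func (f ` S') Z| \<le>o |D|" using hyp by simp
  have "|S'| \<le>o |f ` S'|" 
    unfolding card_of_ordLeq[symmetric] using f(1) by blast
  then have 2: "|Func S' Z| \<le>o |Func (f ` S') Z|"
    by (rule Func_mono_card[OF ordLeq_refl[OF card_of_Card_order]]) simp
  show ?thesis using ordLeq_transitive[OF 2 1] .
next
  case False
  then have "finite S'" using sm unfolding small_def by blast
  then show ?thesis using ordLeq_transitive[OF Func_finite_card[OF _ Zinf] ZD] by blast
qed

lemma Field_Restr_sub:
  assumes "Well_order w" "S \<subseteq> Field w"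
  shows "Field (Restr w S) = S"
proof -
  have "refl_on (Field w) w" using assms(1)
    unfolding well_order_on_def linear_order_on_def partial_order_on_def preorder_on_def by blast
  then have "\<And>x. x \<in> S \<Longrightarrow> (x,x) \<in> Restr w S" using assms(2) unfolding refl_on_def by blast
  then show ?thesis unfolding Field_def by blast
qed

lemma iso_bij_from:
  assumes "s =o t"
  shows "\<exists>f. bij_betw f (Field s) (Field t)"
  using assms unfolding ordIso_def iso_def by blast

lemma nth_elem_bij:
  assumes "Well_order r" "a \<subseteq> Field r" "Restr r a =o \<sigma>"
  shows "bij_betw (nth_elem r \<sigma> a) (Field \<sigma>) a"
proof -
  have "\<sigma> =o Restr r a" using assms(3) ordIso_symmetric by blast
  then have "\<exists>f. iso \<sigma> (Restr r a) f" unfolding ordIso_def by blast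
  then have "iso \<sigma> (Restr r a) (SOME f. iso \<sigma> (Restr r a) f)" by (rule someI_ex)
  then have "bij_betw (SOME f. iso \<sigma> (Restr r a) f) (Field \<sigma>) (Field (Restr r a))"
    unfolding iso_def by blast
  moreover have "nth_elem r \<sigma> a = (SOME f. iso \<sigma> (Restr r a) f)"
    by (rule ext) (simp add: nth_elem_def)
  ultimately show ?thesis using Field_Restr_sub[OF assms(1,2)] by simp
qed

lemma pigeon:
  fixes r :: "'a rel" and A :: "'b set" and pat :: "'b \<Rightarrow> 'p"
  assumes "Card_order r" "infinite (Field r)" "regularCard r"
    and "|A| =o r" "\<forall>a\<in>A. pat a \<in> P" "|P| <o r"
  shows "\<exists>\<pi>. |{a\<in>A. pat a = \<pi>}| =o r"
proof (rule ccontr)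
  assume nn: "\<not> ?thesis"
  have cls: "|{a\<in>A. pat a = \<pi>}| <o r" for \<pi>
  proof -
    have "|{a\<in>A. pat a = \<pi>}| \<le>o |A|" by (rule card_of_mono1) blast
    then have "|{a\<in>A. pat a = \<pi>}| \<le>o r" using ordLeq_ordIso_trans assms(4) by blast
    then show ?thesis using nn ordLeq_iff_ordLess_or_ordIso by blast
  qed
  have eq: "A = (\<Union>\<pi>\<in>P. {a\<in>A. pat a = \<pi>})" using assms(5) by blast
  have "Cinfinite r" using assms(1,2) unfolding cinfinite_def by blast
  then have "|\<Union>\<pi>\<in>P. {a\<in>A. pat a = \<pi>}| <o r"
    using regularCard_UNION_bound[of r P "\<lambda>\<pi>. {a\<in>A. pat a = \<pi>}"] assms(3,6) cls by blast
  then have "|A| <o r" using eq by simp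
  then show False using assms(4) not_ordLess_ordIso by blast
qed



locale cod =
  fixes r :: "'a rel" and L :: "'l set" and X :: "'x set" and T :: "'t set" and C :: "'c set"
    and x1 x2 :: 'x
  assumes card: "Card_order r"
    and reg: "regularCard r"
    and unc: "natLeq <o r"
    and Lfun: "\<forall>S::'x set. |S| <o |X| \<longrightarrow> |Func S L| \<le>o |C|"
    and Clt: "|C| <o r"
    and CT: "|C| \<le>o |T|"
    and kpow: "r \<le>o |Pow L|"
    and Tfun: "\<forall>S::'x set. |S| <o |X| \<longrightarrow> |Func S T| \<le>o |T|"
    and two: "x1 \<in> X" "x2 \<in> X" "x1 \<noteq> x2"
begin

lemma wo: "Well_order r" using card card_order_on_well_order_on by blast

lemma Field_inf: "infinite (Field r)"
proof -
  have "natLeq \<le>o r" using unc ordLess_imp_ordLeq by blast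
  then have "natLeq \<le>o |Field r|"
    using ordLeq_ordIso_trans card_of_Field_ordIso[OF card] ordIso_symmetric by blast
  then show ?thesis using infinite_iff_natLeq_ordLeq by blast
qed

lemma L_inf: "infinite L"
proof -
  have "natLeq \<le>o |Pow L|" using unc kpow ordLess_imp_ordLeq ordLeq_transitive by blast
  then have "infinite (Pow L)" using infinite_iff_natLeq_ordLeq by blast
  then show ?thesis by simp
qed

lemma L_le_C: "|L| \<le>o |C|"
proof -
  have 1: "|L| \<le>o |Func {x1} L|"
    by (rule card_of_ordLeqI[where f="\<lambda>l x. if x = x1 then l else undefined"])
       (auto simp: inj_on_def fun_eq_iff Func_def)
  have "|{x1}| <o |X|" using singl_less_two[OF two] .
  then have 2: "|Func {x1} L| \<le>o |C|" using Lfun by blast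
  show ?thesis using ordLeq_transitive[OF 1 2] .
qed

lemma C_inf: "infinite C" using card_of_ordLeq_infinite[OF L_le_C L_inf] .
lemma L_le_T: "|L| \<le>o |T|" using ordLeq_transitive[OF L_le_C CT] .
lemma T_inf: "infinite T" using card_of_ordLeq_infinite[OF L_le_T L_inf] .

lemma smallL: "small X S \<Longrightarrow> |Func S L| \<le>o |C|"
  using small_transfer[OF Lfun L_inf L_le_C] .

lemma smallT: "small X S \<Longrightarrow> |Func S T| \<le>o |T|"
  using small_transfer[OF Tfun T_inf ordLeq_refl[OF card_of_Card_order]] .

lemma bool_le: "infinite Z \<Longrightarrow> |UNIV::bool set| \<le>o |Z|"
  by (rule ordLess_imp_ordLeq[OF fin_less_inf]) simp_all

lemma smallB: "small X S \<Longrightarrow> |Func S (UNIV::bool set)| \<le>o |C|"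
proof -
  assume s: "small X S"
  have "|Func S (UNIV::bool set)| \<le>o |Func S L|"
    by (rule Func_mono_card[OF bool_le[OF L_inf] ordLeq_refl[OF card_of_Card_order]]) simp
  then show ?thesis using ordLeq_transitive smallL[OF s] by blast
qed

lemma X_le_T: "|X| \<le>o |T|"
proof (rule ccontr)
  assume "\<not> |X| \<le>o |T|"
  then have "|T| <o |X|" using not_ordLeq_iff_ordLess[OF card_of_Well_order card_of_Well_order] by blast
  then have "small X T" unfolding small_def by blast
  then have 1: "|Func T T| \<le>o |T|" by (rule smallT)
  have 2: "|Func T (UNIV::bool set)| \<le>o |Func T T|"
    by (rule Func_mono_card[OF bool_le[OF T_inf] ordLeq_refl[OF card_of_Card_order]]) simp
  have "|Pow T| \<le>o |T|"
    using ordIso_ordLeq_trans[OF card_of_Pow_Func ordLeq_transitive[OF 2 1]] .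
  then show False using card_of_Pow not_ordLeq_ordLess by blast
qed

definition Ix :: "'x \<Rightarrow> 'x set" where "Ix j = underS |X| j"

lemma small_Ix: "j \<in> X \<Longrightarrow> small X (Ix j)"
  unfolding small_def Ix_def using card_of_underS[OF card_of_Card_order, of j X]
  by (simp add: Field_card_of)


lemma Ix_sub: "Ix j \<subseteq> X"
proof -
  have "Ix j \<subseteq> Field |X|" unfolding Ix_def underS_def Field_def by blast
  then show ?thesis by (simp add: Field_card_of)
qed

lemma FF_ex: "\<exists>F. inj_on F (Field r) \<and> F ` Field r \<subseteq> Pow L"
proof -
  have "|Field r| \<le>o |Pow L|" using ordIso_ordLeq_trans[OF card_of_Field_ordIso[OF card] kpow] .
  then show ?thesis unfolding card_of_ordLeq[symmetric] .
qed

definition FF :: "'a \<Rightarrow> 'l set" where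
  "FF = (SOME F. inj_on F (Field r) \<and> F ` Field r \<subseteq> Pow L)"

lemma FF: "inj_on FF (Field r)" "\<And>x. x \<in> Field r \<Longrightarrow> FF x \<subseteq> L"
  using someI_ex[OF FF_ex] unfolding FF_def[symmetric] by blast+

definition Dl :: "'a \<Rightarrow> 'a \<Rightarrow> 'l" where
  "Dl \<alpha> \<beta> = (SOME z. z \<in> L \<and> (\<alpha> \<noteq> \<beta> \<longrightarrow> (z \<in> FF \<alpha> \<longleftrightarrow> z \<notin> FF \<beta>)))"

lemma Dl: assumes "\<alpha> \<in> Field r" "\<beta> \<in> Field r"
  shows "Dl \<alpha> \<beta> \<in> L \<and> (\<alpha> \<noteq> \<beta> \<longrightarrow> (Dl \<alpha> \<beta> \<in> FF \<alpha> \<longleftrightarrow> Dl \<alpha> \<beta> \<notin> FF \<beta>))"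
proof -
  have "\<exists>z. z \<in> L \<and> (\<alpha> \<noteq> \<beta> \<longrightarrow> (z \<in> FF \<alpha> \<longleftrightarrow> z \<notin> FF \<beta>))"
  proof (cases "\<alpha> = \<beta>")
    case True
    then show ?thesis using L_inf by (metis finite.emptyI ex_in_conv)
  next
    case False
    then have "FF \<alpha> \<noteq> FF \<beta>" using FF(1) assms unfolding inj_on_def by blast
    then obtain z where "(z \<in> FF \<alpha>) \<noteq> (z \<in> FF \<beta>)" by blast
    moreover have "z \<in> L" using calculation FF(2)[OF assms(1)] FF(2)[OF assms(2)] by blast
    ultimately show ?thesis by blast
  qed
  then show ?thesis unfolding Dl_def by (rule someI_ex)
qed

definition KK :: "('x \<times> ('x \<times> 'x \<Rightarrow> 'l) \<times> ('x \<times> ('x \<times> 'x) \<Rightarrow> bool) \<times> ('x \<times> 'x \<Rightarrow> 'l)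
     \<times> ('x \<times> ('x \<times> 'x) \<Rightarrow> bool) \<times> ('x \<times> 'x \<Rightarrow> 't)) set" where
  "KK = (\<Union>j\<in>X. {j} \<times> (Func (Ix j \<times> Ix j) L \<times> Func (Ix j \<times> (Ix j \<times> Ix j)) UNIV
      \<times> Func (Ix j \<times> Ix j) L \<times> Func (Ix j \<times> (Ix j \<times> Ix j)) UNIV \<times> Func (Ix j \<times> Ix j) T))"

lemma KK_le: "|KK| \<le>o |T|"
  unfolding KK_def
proof (rule card_of_UNION_ordLeq_infinite[OF T_inf X_le_T], intro ballI)
  fix j assume j: "j \<in> X"
  have sQ: "small X (Ix j \<times> Ix j)" using small_times small_Ix[OF j] by blast
  have sIQ: "small X (Ix j \<times> (Ix j \<times> Ix j))" using small_times small_Ix[OF j] sQ by blast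
  have a: "|Func (Ix j \<times> Ix j) L| \<le>o |T|" using ordLeq_transitive[OF smallL[OF sQ] CT] .
  have b: "|Func (Ix j \<times> (Ix j \<times> Ix j)) (UNIV::bool set)| \<le>o |T|"
    using ordLeq_transitive[OF smallB[OF sIQ] CT] .
  have c: "|Func (Ix j \<times> Ix j) T| \<le>o |T|" using smallT[OF sQ] .
  have d: "|{j}| \<le>o |T|" by (rule ordLess_imp_ordLeq[OF fin_less_inf[OF _ T_inf]]) simp
  show "|{j} \<times> (Func (Ix j \<times> Ix j) L \<times> Func (Ix j \<times> (Ix j \<times> Ix j)) (UNIV::bool set)
      \<times> Func (Ix j \<times> Ix j) L \<times> Func (Ix j \<times> (Ix j \<times> Ix j)) (UNIV::bool set) \<times> Func (Ix j \<times> Ix j) T)| \<le>o |T|"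
    by (intro times_le_inf[OF T_inf] a b c d)
qed

lemma KK_ne: "KK \<noteq> {}"
proof -
  have "Func (Ix x1 \<times> Ix x1) L \<noteq> {}" "Func (Ix x1 \<times> (Ix x1 \<times> Ix x1)) (UNIV::bool set) \<noteq> {}"
     "Func (Ix x1 \<times> Ix x1) T \<noteq> {}"
    using L_inf T_inf by (auto simp: Func_is_emp)
  then show ?thesis unfolding KK_def using two(1) by blast
qed

definition dec where "dec = (SOME g. g ` T = KK)"

lemma dec: "dec ` T = KK"
proof -
  have "\<exists>g. g ` T = KK" using card_of_ordLeq2[OF KK_ne] KK_le by blast
  then show ?thesis unfolding dec_def by (rule someI_ex)
qed

definition t0 where "t0 = (SOME t. t \<in> T)"
lemma t0: "t0 \<in> T" unfolding t0_def using T_inf by (metis finite.emptyI ex_in_conv someI_ex)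

definition mt where "mt e sg Q k \<alpha> \<longleftrightarrow> (\<forall>q\<in>Q. sg (k,q) = (e q \<in> FF \<alpha>))"

definition dc where
 "dc cd \<alpha> \<beta> = (case cd of (j,e1,s1,e2,s2,h) \<Rightarrow>
    (if \<exists>kl \<in> Ix j \<times> Ix j. mt e1 s1 (Ix j \<times> Ix j) (fst kl) \<alpha> \<and> mt e2 s2 (Ix j \<times> Ix j) (snd kl) \<beta>
     then (let kl = SOME kl. kl \<in> Ix j \<times> Ix j \<and> mt e1 s1 (Ix j \<times> Ix j) (fst kl) \<alpha> \<and> mt e2 s2 (Ix j \<times> Ix j) (snd kl) \<beta>
           in if h kl \<in> T then h kl else t0)
     else t0))"

lemma dc_T: "dc cd \<alpha> \<beta> \<in> T"
  unfolding dc_def using t0 by (auto simp: Let_def split: prod.split)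

lemma mt_unique:
  assumes sep: "\<forall>k\<in>Ix j. \<forall>l\<in>Ix j. k \<noteq> l \<longrightarrow> ((e (k,l) \<in> FF (ea k)) \<noteq> (e (k,l) \<in> FF (ea l)))"
    and sg: "\<forall>k\<in>Ix j. \<forall>q\<in>Ix j \<times> Ix j. s (k,q) = (e q \<in> FF (ea k))"
    and k: "k \<in> Ix j" and k': "k' \<in> Ix j" and m: "mt e s (Ix j \<times> Ix j) k' (ea k)"
  shows "k' = k"
proof (rule ccontr)
  assume ne: "k' \<noteq> k"
  have "s (k', (k',k)) = (e (k',k) \<in> FF (ea k))" using m k k' unfolding mt_def by blast
  moreover have "s (k', (k',k)) = (e (k',k) \<in> FF (ea k'))" using sg k k' by blast
  ultimately show False using sep k k' ne by blast
qed

lemma dc_correct: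
  assumes sepA: "\<forall>k\<in>Ix j. \<forall>l\<in>Ix j. k \<noteq> l \<longrightarrow> ((e1 (k,l) \<in> FF (ea k)) \<noteq> (e1 (k,l) \<in> FF (ea l)))"
    and sgA: "\<forall>k\<in>Ix j. \<forall>q\<in>Ix j \<times> Ix j. s1 (k,q) = (e1 q \<in> FF (ea k))"
    and sepB: "\<forall>k\<in>Ix j. \<forall>l\<in>Ix j. k \<noteq> l \<longrightarrow> ((e2 (k,l) \<in> FF (eb k)) \<noteq> (e2 (k,l) \<in> FF (eb l)))"
    and sgB: "\<forall>k\<in>Ix j. \<forall>q\<in>Ix j \<times> Ix j. s2 (k,q) = (e2 q \<in> FF (eb k))"
    and hT: "\<forall>q\<in>Ix j \<times> Ix j. h q \<in> T"
    and k: "k \<in> Ix j" and l: "l \<in> Ix j"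
  shows "dc (j,e1,s1,e2,s2,h) (ea k) (eb l) = h (k,l)"
proof -
  let ?P = "\<lambda>kl. kl \<in> Ix j \<times> Ix j \<and> mt e1 s1 (Ix j \<times> Ix j) (fst kl) (ea k) \<and> mt e2 s2 (Ix j \<times> Ix j) (snd kl) (eb l)"
  have P: "?P (k,l)" using sgA sgB k l unfolding mt_def by auto
  have Pu: "kl = (k,l)" if "?P kl" for kl
  proof -
    obtain k' l' where kl: "kl = (k',l')" by fastforce
    have "k' = k" using mt_unique[OF sepA sgA k, of k'] that kl by auto
    moreover have "l' = l" using mt_unique[OF sepB sgB l, of l'] that kl by auto
    ultimately show ?thesis using kl by simp
  qed
  have "(SOME kl. ?P kl) = (k,l)" using P Pu by (rule some_equality)
  moreover have "\<exists>kl \<in> Ix j \<times> Ix j. mt e1 s1 (Ix j \<times> Ix j) (fst kl) (ea k) \<and> mt e2 s2 (Ix j \<times> Ix j) (snd kl) (eb l)"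
    using P by blast
  ultimately show ?thesis unfolding dc_def using hT k l by (simp add: Let_def)
qed


definition eaf where "eaf \<sigma> g a k = nth_elem r \<sigma> a (g k)"
definition eof where "eof \<sigma> g j a = (\<lambda>q. if q \<in> Ix j \<times> Ix j then Dl (eaf \<sigma> g a (fst q)) (eaf \<sigma> g a (snd q)) else undefined)"
definition sof where "sof \<sigma> g j a = (\<lambda>kq. if fst kq \<in> Ix j \<and> snd kq \<in> Ix j \<times> Ix j then eof \<sigma> g j a (snd kq) \<in> FF (eaf \<sigma> g a (fst kq)) else undefined)"

lemma fam:
  assumes a: "a \<subseteq> Field r" "Restr r a =o \<sigma>" and g: "bij_betw g (Ix j) (Field \<sigma>)"
  shows "\<forall>k\<in>Ix j. eaf \<sigma> g a k \<in> a"
    and "\<forall>k\<in>Ix j. \<forall>l\<in>Ix j. k \<noteq> l \<longrightarrow> ((eof \<sigma> g j a (k,l) \<in> FF (eaf \<sigma> g a k)) \<noteq> (eof \<sigma> g j a (k,l) \<in> FF (eaf \<sigma> g a l)))"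
    and "\<forall>k\<in>Ix j. \<forall>q\<in>Ix j \<times> Ix j. sof \<sigma> g j a (k,q) = (eof \<sigma> g j a q \<in> FF (eaf \<sigma> g a k))"
    and "eof \<sigma> g j a \<in> Func (Ix j \<times> Ix j) L"
    and "sof \<sigma> g j a \<in> Func (Ix j \<times> (Ix j \<times> Ix j)) UNIV"
proof -
  have nb: "bij_betw (nth_elem r \<sigma> a) (Field \<sigma>) a" using nth_elem_bij[OF wo a] .
  have eq: "eaf \<sigma> g a = nth_elem r \<sigma> a \<circ> g" by (rule ext) (simp add: eaf_def)
  have bb: "bij_betw (eaf \<sigma> g a) (Ix j) a" unfolding eq using bij_betw_trans[OF g nb] .
  show in_a: "\<forall>k\<in>Ix j. eaf \<sigma> g a k \<in> a" using bb bij_betwE by blast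
  have inj: "inj_on (eaf \<sigma> g a) (Ix j)" using bb bij_betw_def by blast
  show "\<forall>k\<in>Ix j. \<forall>l\<in>Ix j. k \<noteq> l \<longrightarrow> ((eof \<sigma> g j a (k,l) \<in> FF (eaf \<sigma> g a k)) \<noteq> (eof \<sigma> g j a (k,l) \<in> FF (eaf \<sigma> g a l)))"
  proof (intro ballI impI)
    fix k l assume k: "k \<in> Ix j" and l: "l \<in> Ix j" and kl: "k \<noteq> l"
    have ne: "eaf \<sigma> g a k \<noteq> eaf \<sigma> g a l" using inj k l kl unfolding inj_on_def by blast
    have "eaf \<sigma> g a k \<in> Field r" "eaf \<sigma> g a l \<in> Field r" using in_a k l a(1) by blast+
    then show "(eof \<sigma> g j a (k,l) \<in> FF (eaf \<sigma> g a k)) \<noteq> (eof \<sigma> g j a (k,l) \<in> FF (eaf \<sigma> g a l))"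
      using Dl ne k l unfolding eof_def by auto
  qed
  show "\<forall>k\<in>Ix j. \<forall>q\<in>Ix j \<times> Ix j. sof \<sigma> g j a (k,q) = (eof \<sigma> g j a q \<in> FF (eaf \<sigma> g a k))"
    unfolding sof_def by auto
  show "eof \<sigma> g j a \<in> Func (Ix j \<times> Ix j) L"
  proof -
    have "\<forall>q\<in>Ix j \<times> Ix j. eof \<sigma> g j a q \<in> L"
    proof
      fix q assume q: "q \<in> Ix j \<times> Ix j"
      then have "eaf \<sigma> g a (fst q) \<in> Field r" "eaf \<sigma> g a (snd q) \<in> Field r" using in_a a(1) by auto
      then show "eof \<sigma> g j a q \<in> L" using Dl q unfolding eof_def by auto
    qed
    then show ?thesis unfolding Func_def eof_def by auto
  qed
  show "sof \<sigma> g j a \<in> Func (Ix j \<times> (Ix j \<times> Ix j)) UNIV"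
    unfolding Func_def sof_def by auto
qed

definition hfun where "hfun j \<tau> g \<nu> = (\<lambda>q. if q \<in> Ix j \<times> Ix j then \<tau> (g (fst q)) (g (snd q)) \<nu> else undefined)"
definition tsel where "tsel j e1 s1 e2 s2 \<tau> g \<nu> = (SOME t. t \<in> T \<and> dec t = (j, e1, s1, e2, s2, hfun j \<tau> g \<nu>))"

lemma tsel:
  assumes "j \<in> X" "e1 \<in> Func (Ix j \<times> Ix j) L" "s1 \<in> Func (Ix j \<times> (Ix j \<times> Ix j)) UNIV"
    "e2 \<in> Func (Ix j \<times> Ix j) L" "s2 \<in> Func (Ix j \<times> (Ix j \<times> Ix j)) UNIV"
    "\<forall>q\<in>Ix j \<times> Ix j. \<tau> (g (fst q)) (g (snd q)) \<nu> \<in> T"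
  shows "tsel j e1 s1 e2 s2 \<tau> g \<nu> \<in> T \<and> dec (tsel j e1 s1 e2 s2 \<tau> g \<nu>) = (j, e1, s1, e2, s2, hfun j \<tau> g \<nu>)"
proof -
  have "hfun j \<tau> g \<nu> \<in> Func (Ix j \<times> Ix j) T" using assms(6) unfolding hfun_def Func_def by auto
  then have "(j, e1, s1, e2, s2, hfun j \<tau> g \<nu>) \<in> KK" unfolding KK_def using assms(1-5) by blast
  then have "\<exists>t. t \<in> T \<and> dec t = (j, e1, s1, e2, s2, hfun j \<tau> g \<nu>)" using dec by (metis imageE)
  then show ?thesis unfolding tsel_def by (rule someI_ex)
qed

definition c0 where "c0 c1 \<alpha> \<beta> = dc (dec (c1 \<alpha> \<beta>)) \<alpha> \<beta>"

lemma c0_col: "coloring_into r (c0 c1) T"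
  unfolding coloring_into_def c0_def using dc_T by blast

lemma core:
  assumes j: "j \<in> X" and g: "bij_betw g (Ix j) (Field \<sigma>)"
    and a: "a \<subseteq> Field r" "Restr r a =o \<sigma>" and b: "b \<subseteq> Field r" "Restr r b =o \<sigma>"
    and ab: "set_lt r a b" and p: "coloring_into r p M"
    and \<tau>: "\<forall>i\<in>Field \<sigma>. \<forall>i'\<in>Field \<sigma>. \<forall>x\<in>M. \<tau> i i' x \<in> T"
    and c1eq: "\<forall>\<alpha>\<in>a. \<forall>\<beta>\<in>b. c1 \<alpha> \<beta> = tsel j (eof \<sigma> g j a) (sof \<sigma> g j a) (eof \<sigma> g j b) (sof \<sigma> g j b) \<tau> g (p \<alpha> \<beta>)"
  shows "\<forall>i\<in>Field \<sigma>. \<forall>i'\<in>Field \<sigma>. c0 c1 (nth_elem r \<sigma> a i) (nth_elem r \<sigma> b i')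
            = \<tau> i i' (p (nth_elem r \<sigma> a i) (nth_elem r \<sigma> b i'))"
proof (intro ballI)
  fix i i' assume i: "i \<in> Field \<sigma>" and i': "i' \<in> Field \<sigma>"
  define k where "k = inv_into (Ix j) g i"
  define l where "l = inv_into (Ix j) g i'"
  have k: "k \<in> Ix j" "g k = i" unfolding k_def using g i
    by (auto simp: bij_betw_def intro: inv_into_into f_inv_into_f)
  have l: "l \<in> Ix j" "g l = i'" unfolding l_def using g i'
    by (auto simp: bij_betw_def intro: inv_into_into f_inv_into_f)
  note fa = fam[OF a g] and fb = fam[OF b g]
  have \<alpha>: "nth_elem r \<sigma> a i = eaf \<sigma> g a k" using k by (simp add: eaf_def)
  have \<beta>: "nth_elem r \<sigma> b i' = eaf \<sigma> g b l" using l by (simp add: eaf_def)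
  have \<alpha>a: "eaf \<sigma> g a k \<in> a" using fa(1) k by blast
  have \<beta>b: "eaf \<sigma> g b l \<in> b" using fb(1) l by blast
  have olt: "olt r (eaf \<sigma> g a k) (eaf \<sigma> g b l)" using ab \<alpha>a \<beta>b unfolding set_lt_def by blast
  define \<nu> where "\<nu> = p (eaf \<sigma> g a k) (eaf \<sigma> g b l)"
  have \<nu>M: "\<nu> \<in> M" using p olt unfolding coloring_into_def \<nu>_def by blast
  have gI: "\<forall>q\<in>Ix j \<times> Ix j. g (fst q) \<in> Field \<sigma> \<and> g (snd q) \<in> Field \<sigma>" using g bij_betwE by fastforce
  have hT: "\<forall>q\<in>Ix j \<times> Ix j. \<tau> (g (fst q)) (g (snd q)) \<nu> \<in> T" using gI \<tau> \<nu>M by blast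
  have ts: "dec (c1 (eaf \<sigma> g a k) (eaf \<sigma> g b l)) = (j, eof \<sigma> g j a, sof \<sigma> g j a, eof \<sigma> g j b, sof \<sigma> g j b, hfun j \<tau> g \<nu>)"
    using c1eq \<alpha>a \<beta>b tsel[where \<tau>=\<tau> and g=g and \<nu>=\<nu>, OF j fa(4) fa(5) fb(4) fb(5) hT] unfolding \<nu>_def by simp
  have hT': "\<forall>q\<in>Ix j \<times> Ix j. hfun j \<tau> g \<nu> q \<in> T" using hT unfolding hfun_def by simp
  have "c0 c1 (eaf \<sigma> g a k) (eaf \<sigma> g b l) = hfun j \<tau> g \<nu> (k,l)"
    unfolding c0_def ts using dc_correct[OF fa(2) fa(3) fb(2) fb(3) hT' k(1) l(1)] .
  also have "\<dots> = \<tau> i i' \<nu>" using k l unfolding hfun_def by simp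
  finally show "c0 c1 (nth_elem r \<sigma> a i) (nth_elem r \<sigma> b i') = \<tau> i i' (p (nth_elem r \<sigma> a i) (nth_elem r \<sigma> b i'))"
    unfolding \<alpha> \<beta> \<nu>_def .
qed


lemma sigma_setup:
  assumes "Well_order \<sigma>" "\<sigma> <o |X|"
  obtains j g where "j \<in> X" "bij_betw g (Ix j) (Field \<sigma>)"
proof -
  have "\<exists>j\<in>X. \<sigma> =o Restr |X| (underS |X| j)"
    using ordLess_iff_ordIso_Restr[OF card_of_Well_order[of X] assms(1)] assms(2) by (simp add: Field_card_of)
  then obtain j where j: "j \<in> X" "\<sigma> =o Restr |X| (underS |X| j)" by blast
  obtain f where f: "bij_betw f (Field \<sigma>) (Field (Restr |X| (Ix j)))"
    using iso_bij_from[OF j(2)] unfolding Ix_def by blast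
  have "Field (Restr |X| (Ix j)) = Ix j"
    using Field_Restr_sub[OF card_of_Well_order, of "Ix j" X] Ix_sub by (simp add: Field_card_of)
  then have "bij_betw (inv_into (Field \<sigma>) f) (Ix j) (Field \<sigma>)" using f bij_betw_inv_into by fastforce
  then show ?thesis using j(1) that by blast
qed

lemma thin:
  assumes j: "j \<in> X" and g: "bij_betw g (Ix j) (Field \<sigma>)"
    and A: "disj_fam r \<sigma> A" "|A| =o r"
  obtains A' where "A' \<subseteq> A" "disj_fam r \<sigma> A'" "|A'| =o r"
     "\<forall>a\<in>A'. \<forall>b\<in>A'. eof \<sigma> g j a = eof \<sigma> g j b \<and> sof \<sigma> g j a = sof \<sigma> g j b"
proof -
  let ?P = "Func (Ix j \<times> Ix j) L \<times> Func (Ix j \<times> (Ix j \<times> Ix j)) (UNIV::bool set)"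
  have sQ: "small X (Ix j \<times> Ix j)" using small_times small_Ix[OF j] by blast
  have sIQ: "small X (Ix j \<times> (Ix j \<times> Ix j))" using small_times small_Ix[OF j] sQ by blast
  have "|?P| \<le>o |C|" using times_le_inf[OF C_inf smallL[OF sQ] smallB[OF sIQ]] .
  then have Pr: "|?P| <o r" using ordLeq_ordLess_trans Clt by blast
  have inP: "\<forall>a\<in>A. (eof \<sigma> g j a, sof \<sigma> g j a) \<in> ?P"
  proof
    fix a assume "a \<in> A"
    then have "a \<subseteq> Field r" "Restr r a =o \<sigma>" using A(1) unfolding disj_fam_def by blast+
    then show "(eof \<sigma> g j a, sof \<sigma> g j a) \<in> ?P" using fam(4,5)[OF _ _ g] by blast
  qed
  obtain \<pi> where \<pi>: "|{a\<in>A. (eof \<sigma> g j a, sof \<sigma> g j a) = \<pi>}| =o r"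
    using pigeon[OF card Field_inf reg A(2) inP Pr] by blast
  let ?A' = "{a\<in>A. (eof \<sigma> g j a, sof \<sigma> g j a) = \<pi>}"
  have "disj_fam r \<sigma> ?A'" using A(1) unfolding disj_fam_def
    by (metis (no_types, lifting) mem_Collect_eq pairwise_subset subsetI)
  show ?thesis
  proof (rule that[of ?A'])
    show "|?A'| =o r" using \<pi> .
  qed (use \<open>disj_fam r \<sigma> ?A'\<close> in auto)
qed

lemma card_r_ne: "|A| =o r \<Longrightarrow> A \<noteq> {}"
proof
  assume "|A| =o r" "A = {}"
  then have "r =o |{}::'b set|" using ordIso_symmetric by blast
  then have "|Field r| =o |{}::'b set|" using ordIso_transitive card_of_Field_ordIso[OF card] by blast
  then show False using Field_inf card_of_ordIso_finite by blast
qed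

lemma pr0_main:
  fixes M :: "'m set" and p :: "'a \<Rightarrow> 'a \<Rightarrow> 'm"
  assumes p: "coloring_into r p M" and h: "pr1 r T X M p c1"
  shows "pr0 r T X M p (c0 c1)"
  unfolding pr0_def
proof (intro allI impI)
  fix \<sigma> :: "'a rel" and A :: "'a set set" and \<tau> :: "'a \<Rightarrow> 'a \<Rightarrow> 'm \<Rightarrow> 't"
  assume \<sigma>: "Well_order \<sigma> \<and> \<sigma> <o |X|" and A: "disj_fam r \<sigma> A \<and> |A| =o r"
    and \<tau>: "\<forall>i\<in>Field \<sigma>. \<forall>j\<in>Field \<sigma>. \<forall>x\<in>M. \<tau> i j x \<in> T"
  obtain j g where jg: "j \<in> X" "bij_betw g (Ix j) (Field \<sigma>)" using sigma_setup[OF conjunct1[OF \<sigma>] conjunct2[OF \<sigma>]] by blast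
  obtain A' where A': "A' \<subseteq> A" "disj_fam r \<sigma> A'" "|A'| =o r"
     "\<forall>a\<in>A'. \<forall>b\<in>A'. eof \<sigma> g j a = eof \<sigma> g j b \<and> sof \<sigma> g j a = sof \<sigma> g j b"
    by (rule thin[OF jg conjunct1[OF A] conjunct2[OF A]])
  obtain a0 where a0: "a0 \<in> A'" using card_r_ne[OF A'(3)] by blast
  have a0f: "a0 \<subseteq> Field r" "Restr r a0 =o \<sigma>" using A'(2) a0 unfolding disj_fam_def by blast+
  note fa0 = fam[OF a0f jg(2)]
  define \<tau>' where "\<tau>' = tsel j (eof \<sigma> g j a0) (sof \<sigma> g j a0) (eof \<sigma> g j a0) (sof \<sigma> g j a0) \<tau> g"
  have gI: "\<forall>q\<in>Ix j \<times> Ix j. g (fst q) \<in> Field \<sigma> \<and> g (snd q) \<in> Field \<sigma>" using jg(2) bij_betwE by fastforce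
  have \<tau>'T: "\<forall>x\<in>M. \<tau>' x \<in> T"
  proof
    fix x assume x: "x \<in> M"
    have "\<forall>q\<in>Ix j \<times> Ix j. \<tau> (g (fst q)) (g (snd q)) x \<in> T" using gI \<tau> x by blast
    then show "\<tau>' x \<in> T" unfolding \<tau>'_def
      using tsel[where \<tau>=\<tau> and g=g and \<nu>=x, OF jg(1) fa0(4) fa0(5) fa0(4) fa0(5)] by blast
  qed
  have "\<exists>a\<in>A'. \<exists>b\<in>A'. set_lt r a b \<and> (\<forall>\<alpha>\<in>a. \<forall>\<beta>\<in>b. c1 \<alpha> \<beta> = \<tau>' (p \<alpha> \<beta>))"
    using h[unfolded pr1_def, rule_format, of \<sigma> A' \<tau>'] \<sigma> A'(2,3) \<tau>'T by blast
  then obtain a b where ab: "a \<in> A'" "b \<in> A'" "set_lt r a b" "\<forall>\<alpha>\<in>a. \<forall>\<beta>\<in>b. c1 \<alpha> \<beta> = \<tau>' (p \<alpha> \<beta>)"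
    by blast
  have af: "a \<subseteq> Field r" "Restr r a =o \<sigma>" using A'(2) ab(1) unfolding disj_fam_def by blast+
  have bf: "b \<subseteq> Field r" "Restr r b =o \<sigma>" using A'(2) ab(2) unfolding disj_fam_def by blast+
  have c1eq: "\<forall>\<alpha>\<in>a. \<forall>\<beta>\<in>b. c1 \<alpha> \<beta> = tsel j (eof \<sigma> g j a) (sof \<sigma> g j a) (eof \<sigma> g j b) (sof \<sigma> g j b) \<tau> g (p \<alpha> \<beta>)"
  proof -
    have e: "eof \<sigma> g j a = eof \<sigma> g j a0" "sof \<sigma> g j a = sof \<sigma> g j a0"
        "eof \<sigma> g j b = eof \<sigma> g j a0" "sof \<sigma> g j b = sof \<sigma> g j a0"
      using A'(4) ab(1,2) a0 by blast+
    show ?thesis unfolding e using ab(4) unfolding \<tau>'_def .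
  qed
  show "\<exists>a\<in>A. \<exists>b\<in>A. set_lt r a b \<and> (\<forall>i\<in>Field \<sigma>. \<forall>j\<in>Field \<sigma>.
      c0 c1 (nth_elem r \<sigma> a i) (nth_elem r \<sigma> b j) = \<tau> i j (p (nth_elem r \<sigma> a i) (nth_elem r \<sigma> b j)))"
    using core[OF jg af bf ab(3) p \<tau> c1eq] ab(1,2,3) A'(1) by blast
qed

lemma pr0nu_main:
  fixes M :: "'m set" and p :: "'a \<Rightarrow> 'a \<Rightarrow> 'm"
  assumes p: "coloring_into r p M" and h: "pr1_nu r N T X M p c1"
  shows "pr0_nu r N T X M p (c0 c1)"
  unfolding pr0_nu_def
proof (intro allI impI)
  fix \<sigma> :: "'a rel" and A B :: "'a set set"
  assume \<sigma>: "Well_order \<sigma> \<and> \<sigma> <o |X|" and AB: "disj_fam r \<sigma> A \<and> disj_fam r \<sigma> B \<and> |A| =o |N| \<and> |B| =o r"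
  obtain j g where jg: "j \<in> X" "bij_betw g (Ix j) (Field \<sigma>)" using sigma_setup[OF conjunct1[OF \<sigma>] conjunct2[OF \<sigma>]] by blast
  obtain B' where B': "B' \<subseteq> B" "disj_fam r \<sigma> B'" "|B'| =o r"
     "\<forall>a\<in>B'. \<forall>b\<in>B'. eof \<sigma> g j a = eof \<sigma> g j b \<and> sof \<sigma> g j a = sof \<sigma> g j b"
    by (rule thin[OF jg conjunct1[OF conjunct2[OF AB]] conjunct2[OF conjunct2[OF conjunct2[OF AB]]]])
  obtain b0 where b0: "b0 \<in> B'" using card_r_ne[OF B'(3)] by blast
  have b0f: "b0 \<subseteq> Field r" "Restr r b0 =o \<sigma>" using B'(2) b0 unfolding disj_fam_def by blast+
  note fb0 = fam[OF b0f jg(2)]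
  have "\<exists>a\<in>A. \<forall>\<tau>'::'m \<Rightarrow> 't. (\<forall>x\<in>M. \<tau>' x \<in> T) \<longrightarrow>
           (\<exists>b\<in>B'. set_lt r a b \<and> (\<forall>\<alpha>\<in>a. \<forall>\<beta>\<in>b. c1 \<alpha> \<beta> = \<tau>' (p \<alpha> \<beta>)))"
    using h[unfolded pr1_nu_def, rule_format, of \<sigma> A B'] \<sigma> AB B'(2,3) by blast
  then obtain a where a: "a \<in> A" and ha: "\<forall>\<tau>'::'m \<Rightarrow> 't. (\<forall>x\<in>M. \<tau>' x \<in> T) \<longrightarrow>
           (\<exists>b\<in>B'. set_lt r a b \<and> (\<forall>\<alpha>\<in>a. \<forall>\<beta>\<in>b. c1 \<alpha> \<beta> = \<tau>' (p \<alpha> \<beta>)))"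
    by blast
  have af: "a \<subseteq> Field r" "Restr r a =o \<sigma>" using AB a unfolding disj_fam_def by blast+
  note fa = fam[OF af jg(2)]
  show "\<exists>a\<in>A. \<forall>\<tau>::'a \<Rightarrow> 'a \<Rightarrow> 'm \<Rightarrow> 't. (\<forall>i\<in>Field \<sigma>. \<forall>j\<in>Field \<sigma>. \<forall>x\<in>M. \<tau> i j x \<in> T) \<longrightarrow>
           (\<exists>b\<in>B. set_lt r a b \<and> (\<forall>i\<in>Field \<sigma>. \<forall>j\<in>Field \<sigma>.
              c0 c1 (nth_elem r \<sigma> a i) (nth_elem r \<sigma> b j) = \<tau> i j (p (nth_elem r \<sigma> a i) (nth_elem r \<sigma> b j))))"
  proof (intro bexI[OF _ a] allI impI)
    fix \<tau> :: "'a \<Rightarrow> 'a \<Rightarrow> 'm \<Rightarrow> 't"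
    assume \<tau>: "\<forall>i\<in>Field \<sigma>. \<forall>j\<in>Field \<sigma>. \<forall>x\<in>M. \<tau> i j x \<in> T"
    define \<tau>' where "\<tau>' = tsel j (eof \<sigma> g j a) (sof \<sigma> g j a) (eof \<sigma> g j b0) (sof \<sigma> g j b0) \<tau> g"
    have gI: "\<forall>q\<in>Ix j \<times> Ix j. g (fst q) \<in> Field \<sigma> \<and> g (snd q) \<in> Field \<sigma>" using jg(2) bij_betwE by fastforce
    have \<tau>'T: "\<forall>x\<in>M. \<tau>' x \<in> T"
    proof
      fix x assume x: "x \<in> M"
      have "\<forall>q\<in>Ix j \<times> Ix j. \<tau> (g (fst q)) (g (snd q)) x \<in> T" using gI \<tau> x by blast
      then show "\<tau>' x \<in> T" unfolding \<tau>'_def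
        using tsel[where \<tau>=\<tau> and g=g and \<nu>=x, OF jg(1) fa(4) fa(5) fb0(4) fb0(5)] by blast
    qed
    obtain b where b: "b \<in> B'" "set_lt r a b" "\<forall>\<alpha>\<in>a. \<forall>\<beta>\<in>b. c1 \<alpha> \<beta> = \<tau>' (p \<alpha> \<beta>)"
      using ha \<tau>'T by blast
    have bf: "b \<subseteq> Field r" "Restr r b =o \<sigma>" using B'(2) b(1) unfolding disj_fam_def by blast+
    have c1eq: "\<forall>\<alpha>\<in>a. \<forall>\<beta>\<in>b. c1 \<alpha> \<beta> = tsel j (eof \<sigma> g j a) (sof \<sigma> g j a) (eof \<sigma> g j b) (sof \<sigma> g j b) \<tau> g (p \<alpha> \<beta>)"
    proof -
      have e: "eof \<sigma> g j b = eof \<sigma> g j b0" "sof \<sigma> g j b = sof \<sigma> g j b0"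
        using B'(4) b(1) b0 by blast+
      show ?thesis unfolding e using b(3) unfolding \<tau>'_def .
    qed
    show "\<exists>b\<in>B. set_lt r a b \<and> (\<forall>i\<in>Field \<sigma>. \<forall>j\<in>Field \<sigma>.
              c0 c1 (nth_elem r \<sigma> a i) (nth_elem r \<sigma> b j) = \<tau> i j (p (nth_elem r \<sigma> a i) (nth_elem r \<sigma> b j)))"
      using core[OF jg af bf b(2) p \<tau> c1eq] b(1,2) B'(1) by blast
  qed
qed

end

lemma triv_field:
  assumes "\<not>(\<exists>x1 x2. x1 \<in> X \<and> x2 \<in> X \<and> x1 \<noteq> x2)" "\<sigma> <o |X|"
  shows "Field \<sigma> = {}"
proof (rule ccontr)
  assume "Field \<sigma> \<noteq> {}" then obtain i where i: "i \<in> Field \<sigma>" by blast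
  have "inj_on (\<lambda>_. i) X" using assms(1) by (auto simp: inj_on_def)
  then have "|X| \<le>o |Field \<sigma>|" unfolding card_of_ordLeq[symmetric] using i by blast
  moreover have "|Field \<sigma>| <o |X|" using ordLess_Field[OF assms(2)] .
  ultimately show False using not_ordLess_ordLeq by blast
qed

lemma olt_ex:
  assumes "Card_order r" "natLeq <o r"
  shows "\<exists>\<alpha> \<beta>. olt r \<alpha> \<beta>"
proof -
  have "natLeq \<le>o r" using assms(2) ordLess_imp_ordLeq by blast
  then have "natLeq \<le>o |Field r|"
    using ordLeq_ordIso_trans card_of_Field_ordIso[OF assms(1)] ordIso_symmetric by blast
  then have inf: "infinite (Field r)" using infinite_iff_natLeq_ordLeq by blast
  then obtain \<alpha> where \<alpha>: "\<alpha> \<in> Field r" by (metis finite.emptyI ex_in_conv)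
  have "infinite (Field r - {\<alpha>})" using inf by simp
  then obtain \<beta> where \<beta>: "\<beta> \<in> Field r - {\<alpha>}" by (metis finite.emptyI ex_in_conv)
  have "total_on (Field r) r" using assms(1)
    unfolding card_order_on_def well_order_on_def linear_order_on_def by blast
  then have "(\<alpha>,\<beta>) \<in> r \<or> (\<beta>,\<alpha>) \<in> r" using \<alpha> \<beta> unfolding total_on_def by blast
  then show ?thesis using \<beta> unfolding olt_def by blast
qed

theorem theorem4p1:
  fixes r :: "'a rel" and M :: "'m set" and L :: "'l set" and X :: "'x set"
    and T :: "'t set" and c1 :: "'a \<Rightarrow> 'a \<Rightarrow> 't"
  assumes kappa_card: "Card_order r"
    and kappa_regular: "regularCard r"
    and kappa_uncountable: "(natLeq, r) \<in> ordLess"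
    and mu_le: "(card_of M, r) \<in> ordLeq"
    and lambda_le: "(card_of L, r) \<in> ordLeq"
    and chi_le: "(card_of X, r) \<in> ordLeq"
    and theta_le: "(card_of T, r) \<in> ordLeq"
    and lambda_chi: "\<exists>C::'a set. cexp_less_is L X C \<and> (card_of C, r) \<in> ordLess
                        \<and> (card_of C, card_of T) \<in> ordLeq"
    and kappa_le_pow: "(r, card_of (Pow L)) \<in> ordLeq"
    and theta_chi: "cexp_less_is T X T"
    and c1: "coloring_into r c1 T"
  shows "\<exists>c0 :: 'a \<Rightarrow> 'a \<Rightarrow> 't. coloring_into r c0 T \<and>
           (\<forall>p :: 'a \<Rightarrow> 'a \<Rightarrow> 'm. coloring_into r p M \<longrightarrow>
              (pr1 r T X M p c1 \<longrightarrow> pr0 r T X M p c0) \<and>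
              (\<forall>N :: 'a set set. pr1_nu r N T X M p c1 \<longrightarrow> pr0_nu r N T X M p c0))"
proof -
  obtain C :: "'a set" where C: "cexp_less_is L X C" "|C| <o r" "|C| \<le>o |T|" using lambda_chi by blast
  have Lfun: "\<forall>S::'x set. |S| <o |X| \<longrightarrow> |Func S L| \<le>o |C|" using C(1) unfolding cexp_less_is_def by blast
  have Tfun: "\<forall>S::'x set. |S| <o |X| \<longrightarrow> |Func S T| \<le>o |T|" using theta_chi unfolding cexp_less_is_def by blast
  show ?thesis
  proof (cases "\<exists>x1 x2. x1 \<in> X \<and> x2 \<in> X \<and> x1 \<noteq> x2")
    case True
    then obtain x1 x2 where two: "x1 \<in> X" "x2 \<in> X" "x1 \<noteq> x2" by blast
    interpret cod r L X T C x1 x2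
      using kappa_card kappa_regular kappa_uncountable Lfun C(2) C(3) kappa_le_pow Tfun two
      by unfold_locales
    show ?thesis
      by (intro exI[of _ "c0 c1"] conjI allI impI c0_col pr0_main pr0nu_main)
  next
    case False
    obtain \<alpha> \<beta> where ab: "olt r \<alpha> \<beta>" using olt_ex[OF kappa_card kappa_uncountable] by blast
    define t0 where "t0 = c1 \<alpha> \<beta>"
    have t0: "t0 \<in> T" using c1 ab unfolding coloring_into_def t0_def by blast
    have cT: "\<forall>x\<in>M. (\<lambda>_. t0) x \<in> T" using t0 by blast
    have P0: "pr0 r T X M p c1" if h: "pr1 r T X M p c1" for p :: "'a \<Rightarrow> 'a \<Rightarrow> 'm"
      unfolding pr0_def
    proof (intro allI impI)
      fix \<sigma> :: "'a rel" and A :: "'a set set" and \<tau> :: "'a \<Rightarrow> 'a \<Rightarrow> 'm \<Rightarrow> 't"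
      assume \<sigma>: "Well_order \<sigma> \<and> \<sigma> <o |X|" and A: "disj_fam r \<sigma> A \<and> |A| =o r"
      have F: "Field \<sigma> = {}" using triv_field[OF False] \<sigma> by blast
      have "\<exists>a\<in>A. \<exists>b\<in>A. set_lt r a b \<and> (\<forall>\<alpha>\<in>a. \<forall>\<beta>\<in>b. c1 \<alpha> \<beta> = (\<lambda>_. t0) (p \<alpha> \<beta>))"
        using h[unfolded pr1_def, rule_format, of \<sigma> A "\<lambda>_. t0"] \<sigma> A cT by blast
      then show "\<exists>a\<in>A. \<exists>b\<in>A. set_lt r a b \<and> (\<forall>i\<in>Field \<sigma>. \<forall>j\<in>Field \<sigma>.
          c1 (nth_elem r \<sigma> a i) (nth_elem r \<sigma> b j) = \<tau> i j (p (nth_elem r \<sigma> a i) (nth_elem r \<sigma> b j)))"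
        unfolding F by blast
    qed
    have P1: "pr0_nu r N T X M p c1" if h: "pr1_nu r N T X M p c1" for p :: "'a \<Rightarrow> 'a \<Rightarrow> 'm" and N :: "'a set set"
      unfolding pr0_nu_def
    proof (intro allI impI)
      fix \<sigma> :: "'a rel" and A B :: "'a set set"
      assume \<sigma>: "Well_order \<sigma> \<and> \<sigma> <o |X|" and AB: "disj_fam r \<sigma> A \<and> disj_fam r \<sigma> B \<and> |A| =o |N| \<and> |B| =o r"
      have F: "Field \<sigma> = {}" using triv_field[OF False] \<sigma> by blast
      have "\<exists>a\<in>A. \<forall>\<tau>'::'m \<Rightarrow> 't. (\<forall>x\<in>M. \<tau>' x \<in> T) \<longrightarrow>
           (\<exists>b\<in>B. set_lt r a b \<and> (\<forall>\<alpha>\<in>a. \<forall>\<beta>\<in>b. c1 \<alpha> \<beta> = \<tau>' (p \<alpha> \<beta>)))"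
        using h[unfolded pr1_nu_def, rule_format, of \<sigma> A B] \<sigma> AB by blast
      then obtain a where a: "a \<in> A" and ha: "\<forall>\<tau>'::'m \<Rightarrow> 't. (\<forall>x\<in>M. \<tau>' x \<in> T) \<longrightarrow>
           (\<exists>b\<in>B. set_lt r a b \<and> (\<forall>\<alpha>\<in>a. \<forall>\<beta>\<in>b. c1 \<alpha> \<beta> = \<tau>' (p \<alpha> \<beta>)))" by blast
      have "(\<forall>x\<in>M. (\<lambda>_. t0) x \<in> T) \<longrightarrow> (\<exists>b\<in>B. set_lt r a b \<and> (\<forall>\<alpha>\<in>a. \<forall>\<beta>\<in>b. c1 \<alpha> \<beta> = (\<lambda>_. t0) (p \<alpha> \<beta>)))"
        by (rule spec[OF ha])
      then obtain b where "b \<in> B" "set_lt r a b" using t0 by auto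
      then show "\<exists>a\<in>A. \<forall>\<tau>::'a \<Rightarrow> 'a \<Rightarrow> 'm \<Rightarrow> 't.
             (\<forall>i\<in>Field \<sigma>. \<forall>j\<in>Field \<sigma>. \<forall>x\<in>M. \<tau> i j x \<in> T) \<longrightarrow>
           (\<exists>b\<in>B. set_lt r a b \<and>
              (\<forall>i\<in>Field \<sigma>. \<forall>j\<in>Field \<sigma>.
                 c1 (nth_elem r \<sigma> a i) (nth_elem r \<sigma> b j)
                   = \<tau> i j (p (nth_elem r \<sigma> a i) (nth_elem r \<sigma> b j))))"
        unfolding F using a by blast
    qed
    show ?thesis using c1 P0 P1 by blast
  qed
qed

end
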